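(* Let $n\ge 2$, let $\mathbb{P}\in\mathcal{C}_n$, and let $\mathcal{S}\subset\mathbb{R}_{++}$ be a finite set. Then \[ R_n(\mathbb{P})\ \ge\ R_n\ \ge\ R_n(\mathcal{S}),\qquad\text{where}\quad R_n(\mathcal{S}):=\inf_{g\in\mathcal{G}_n(\mathcal{S})}\ \sup_{x,y\in\mathcal{S}}\big\{\phi^{g}(x,y)\ :\ g(\mathbf{z})=g(\mathbf{z}\pi)\ \text{for all permutations }\pi\text{ of }[n]\text{ and all }\mathbf{z}\in\overline{\mathcal{S}}^n\big\}. \]
   Context: Scheduling on two machines with $n$ tasks. A processing-time matrix is $T=(T_{ij})\in\mathbb{R}_{++}^{2\times n}$. An allocation is $X\in\{0,1\}^{2\times n}$ with $X_{1j}+X_{2j}=1$ for all $j$; makespan $M(X,T)=\max_{i\in\{1,2\}}\sum_j X_{ij}T_{ij}$; $M^*(T)=\min_X M(X,T)$. $\mathcal{P}_n$ is the set of Borel probability measures on $\mathbb{R}^n$ supported in $\mathbb{R}_{++}^n$. For $\mathbb{P}\in\mathcal{P}_n$, algorithm $\mathcal{A}^{\mathbb{P}}$ draws $\mathbf{z}\sim\mathbb{P}$ and sends task $j$ to machine 1 iff $T_{1j}/T_{2j}<z_j$ (else to machine 2). $M(\mathbb{P},T)$ is the expected makespan of this allocation, $R_n(\mathbb{P},T)=M(\mathbb{P},T)/M^*(T)$, $R_n(\mathbb{P})=\sup_{T\in\mathbb{R}_{++}^{2\times n}}R_n(\mathbb{P},T)\in[1,\infty]$, $R_n=\inf_{\mathbb{P}\in\mathcal{P}_n}R_n(\mathbb{P})$.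 $\mathcal{C}_n$ is the set of $\mathbb{P}\in\mathcal{P}_n$ invariant under coordinate permutations (if $\mathbf{z}\sim\mathbb{P}$ then $\mathbf{z}\pi:=(z_{\pi(1)},\dots,z_{\pi(n)})\sim\mathbb{P}$ for every permutation $\pi$). For $D\subseteq\mathbb{R}$ put $\overline{D}=D\cup\{0\}\cup\{\infty\}$. For $\mathbf{x}\le\mathbf{y}$ (coordinatewise) let $V_{xy}=\{x_1,y_1\}\times\cdots\times\{x_n,y_n\}$ and for $\mathbf{b}\in V_{xy}$ let $\mathrm{sgn}(\mathbf{b})=1$ if $b_i=x_i$ for an even number of indices $i$ and $-1$ otherwise. A function $G$ is $n$-increasing on $\overline{D}^n$ if $\sum_{\mathbf{b}\in V_{xy}}\mathrm{sgn}(\mathbf{b})G(\mathbf{b})\ge0$ for all $\mathbf{x}\le\mathbf{y}$ in $\overline{D}^n$. For $\mathcal{S}\subseteq\mathbb{R}_{++}$, $\mathcal{G}_n(\mathcal{S})$ is the set of functions $g:\overline{\mathcal{S}}^n\to[0,1]$ that are right continuous on $\overline{\mathcal{S}}^n$, $n$-increasing on $\overline{\mathcal{S}}^n$, satisfy $g(\mathbf{z})=0$ whenever some $z_i=0$, and satisfy $g(\infty,\dots,\infty)=1$. For $g\in\mathcal{G}_n(\mathcal{S})$ and $x,y\in\mathcal{S}$, \[ \phi^{g}(x,y)=1+y-\min\{1,1-\tfrac1x+y\}\,g(x,\infty,\dots,\infty)-y\,g(y,\infty,\dots,\infty)+\min\{1+\tfrac1x,1+y\}\,g(x,y,\infty,\dots,\infty).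 \] *)

theory Defs
  imports "HOL-Probability.Probability"
begin

text \<open>Tasks are indexed by 0..n-1. A processing-time matrix T is given by its two
rows T1, T2 :: nat => real (only entries j < n matter). An allocation X is encoded by
the set A of tasks sent to machine 1 (the others go to machine 2).\<close>

definition pos_times :: "nat \<Rightarrow> (nat \<Rightarrow> real) \<Rightarrow> (nat \<Rightarrow> real) \<Rightarrow> bool" where
  "pos_times n T1 T2 \<longleftrightarrow> (\<forall>j<n. 0 < T1 j \<and> 0 < T2 j)"

definition makespan :: "nat \<Rightarrow> (nat \<Rightarrow> real) \<Rightarrow> (nat \<Rightarrow> real) \<Rightarrow> nat set \<Rightarrow> real" where
  "makespan n T1 T2 A = max (\<Sum>j\<in>A \<inter> {..<n}. T1 j) (\<Sum>j\<in>{..<n} - A. T2 j)"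

definition opt_makespan :: "nat \<Rightarrow> (nat \<Rightarrow> real) \<Rightarrow> (nat \<Rightarrow> real) \<Rightarrow> real" where
  "opt_makespan n T1 T2 = Min (makespan n T1 T2 ` Pow {..<n})"

definition alg_alloc :: "nat \<Rightarrow> (nat \<Rightarrow> real) \<Rightarrow> (nat \<Rightarrow> real) \<Rightarrow> (nat \<Rightarrow> real) \<Rightarrow> nat set" where
  "alg_alloc n T1 T2 z = {j\<in>{..<n}. T1 j / T2 j < z j}"

definition exp_makespan :: "nat \<Rightarrow> (nat \<Rightarrow> real) measure \<Rightarrow> (nat \<Rightarrow> real) \<Rightarrow> (nat \<Rightarrow> real) \<Rightarrow> real" where
  "exp_makespan n P T1 T2 = (\<integral>z. makespan n T1 T2 (alg_alloc n T1 T2 z) \<partial>P)"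

text \<open>P_n: Borel probability measures on R^n (realised on the extensional function
space over {..<n}) that are concentrated on the positive orthant.\<close>
definition Pn :: "nat \<Rightarrow> (nat \<Rightarrow> real) measure set" where
  "Pn n = {P. sets P = sets (PiM {..<n} (\<lambda>_. borel :: real measure)) \<and> prob_space P
              \<and> (AE z in P. \<forall>j<n. 0 < z j)}"

definition Cn :: "nat \<Rightarrow> (nat \<Rightarrow> real) measure set" where
  "Cn n = {P \<in> Pn n. \<forall>\<pi>. \<pi> permutes {..<n} \<longrightarrow> distr P P (\<lambda>z. z \<circ> \<pi>) = P}"

definition ratio_T :: "nat \<Rightarrow> (nat \<Rightarrow> real) measure \<Rightarrow> (nat \<Rightarrow> real) \<Rightarrow> (nat \<Rightarrow> real) \<Rightarrow> real" where
  "ratio_T n P T1 T2 = exp_makespan n P T1 T2 / opt_makespan n T1 T2"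

definition ratio_P :: "nat \<Rightarrow> (nat \<Rightarrow> real) measure \<Rightarrow> ereal" where
  "ratio_P n P = (SUP T \<in> {(T1, T2). pos_times n T1 T2}. ereal (ratio_T n P (fst T) (snd T)))"

definition Rn :: "nat \<Rightarrow> ereal" where
  "Rn n = (INF P \<in> Pn n. ratio_P n P)"

text \<open>Points of the grid (S \<union> {0,\<infinity>})^n are represented as lists of extended reals of length n.\<close>

definition Sbar :: "real set \<Rightarrow> ereal set" where
  "Sbar S = ereal ` S \<union> {0, \<infinity>}"

definition gdom :: "nat \<Rightarrow> real set \<Rightarrow> ereal list set" where
  "gdom n S = {z. length z = n \<and> set z \<subseteq> Sbar S}"

definition right_cont_on_grid :: "nat \<Rightarrow> real set \<Rightarrow> (ereal list \<Rightarrow> real) \<Rightarrow> bool" where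
  "right_cont_on_grid n S g \<longleftrightarrow>
     (\<forall>z \<in> gdom n S. \<forall>w :: nat \<Rightarrow> ereal list.
        (\<forall>k. w k \<in> gdom n S \<and> list_all2 (\<le>) z (w k)) \<and> (\<forall>i<n. (\<lambda>k. w k ! i) \<longlonglongrightarrow> z ! i)
        \<longrightarrow> (\<lambda>k. g (w k)) \<longlonglongrightarrow> g z)"

text \<open>n-increasing: the g-volume of every box [x,y] with corners in the grid is
nonnegative; the vertex taking x_i exactly for i in K carries sign (-1)^|K|.\<close>
definition n_increasing_on_grid :: "nat \<Rightarrow> real set \<Rightarrow> (ereal list \<Rightarrow> real) \<Rightarrow> bool" where
  "n_increasing_on_grid n S g \<longleftrightarrow>
     (\<forall>x \<in> gdom n S. \<forall>y \<in> gdom n S. list_all2 (\<le>) x y \<longrightarrow>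
        0 \<le> (\<Sum>K \<in> Pow {..<n}. (-1) ^ card K * g (map (\<lambda>i. if i \<in> K then x ! i else y ! i) [0..<n])))"

definition Gn :: "nat \<Rightarrow> real set \<Rightarrow> (ereal list \<Rightarrow> real) set" where
  "Gn n S = {g. (\<forall>z \<in> gdom n S. 0 \<le> g z \<and> g z \<le> 1)
               \<and> right_cont_on_grid n S g
               \<and> n_increasing_on_grid n S g
               \<and> (\<forall>z \<in> gdom n S. (\<exists>i<n. z ! i = 0) \<longrightarrow> g z = 0)
               \<and> g (replicate n \<infinity>) = 1}"

definition symmetric_on_grid :: "nat \<Rightarrow> real set \<Rightarrow> (ereal list \<Rightarrow> real) \<Rightarrow> bool" where
  "symmetric_on_grid n S g \<longleftrightarrow>
     (\<forall>z \<in> gdom n S. \<forall>\<pi>. \<pi> permutes {..<n} \<longrightarrow> g (map (\<lambda>i. z ! \<pi> i) [0..<n]) = g z)"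

definition phi :: "nat \<Rightarrow> (ereal list \<Rightarrow> real) \<Rightarrow> real \<Rightarrow> real \<Rightarrow> real" where
  "phi n g x y = 1 + y
      - min 1 (1 - 1 / x + y) * g (ereal x # replicate (n - 1) \<infinity>)
      - y * g (ereal y # replicate (n - 1) \<infinity>)
      + min (1 + 1 / x) (1 + y) * g (ereal x # ereal y # replicate (n - 2) \<infinity>)"

definition Rn_grid :: "nat \<Rightarrow> real set \<Rightarrow> ereal" where
  "Rn_grid n S = (INF g \<in> {g \<in> Gn n S. symmetric_on_grid n S g}.
                    SUP p \<in> S \<times> S. ereal (phi n g (fst p) (snd p)))"

end

theory Submission
  imports Defs
begin


definition ind :: "ereal \<Rightarrow> real \<Rightarrow> real" where
  "ind c t = (if ereal t \<le> c then 1 else 0)"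

lemma Pn_prob: "P \<in> Pn n \<Longrightarrow> prob_space P"
  by (simp add: Pn_def)

lemma Pn_comp_meas:
  assumes "P \<in> Pn n" "j < n"
  shows "(\<lambda>z. z j) \<in> borel_measurable P"
proof -
  have "sets P = sets (PiM {..<n} (\<lambda>_. borel :: real measure))" using assms by (simp add: Pn_def)
  then have "borel_measurable P = PiM {..<n} (\<lambda>_. borel :: real measure) \<rightarrow>\<^sub>M borel"
    by (rule measurable_cong_sets) simp
  moreover have "(\<lambda>z. z j) \<in> PiM {..<n} (\<lambda>_. borel :: real measure) \<rightarrow>\<^sub>M borel"
    using measurable_component_singleton[of j "{..<n}" "\<lambda>_. borel :: real measure"] assms by simp
  ultimately show ?thesis by metis
qed

lemma ind_meas:
  assumes "f \<in> borel_measurable M"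
  shows "(\<lambda>z. ind c (f z)) \<in> borel_measurable M"
  unfolding ind_def using assms by measurable

lemma ind_01: "0 \<le> ind c t" "ind c t \<le> 1"
  by (auto simp: ind_def)

lemma ind_inf[simp]: "ind \<infinity> t = 1"
  by (simp add: ind_def)

lemma ind_mono: "c \<le> d \<Longrightarrow> ind c t \<le> ind d t"
  by (auto simp: ind_def)

definition Perms :: "nat \<Rightarrow> (nat \<Rightarrow> nat) set" where
  "Perms n = {\<pi>. \<pi> permutes {..<n}}"

definition Ig :: "nat \<Rightarrow> (nat \<Rightarrow> nat) \<Rightarrow> ereal list \<Rightarrow> (nat \<Rightarrow> real) \<Rightarrow> real" where
  "Ig n \<pi> w z = (\<Prod>i<n. ind (w ! i) (z (\<pi> i)))"

definition gP :: "nat \<Rightarrow> (nat \<Rightarrow> real) measure \<Rightarrow> ereal list \<Rightarrow> real" where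
  "gP n P w = (\<Sum>\<pi>\<in>Perms n. \<integral>z. Ig n \<pi> w z \<partial>P) / fact n"

lemma Perms_finite: "finite (Perms n)"
  unfolding Perms_def by (rule finite_permutations) simp

lemma Perms_card: "card (Perms n) = fact n"
  unfolding Perms_def by (rule card_permutations) simp_all

lemma Perms_lt: "\<pi> \<in> Perms n \<Longrightarrow> i < n \<Longrightarrow> \<pi> i < n"
  unfolding Perms_def using permutes_in_image by fastforce

lemma Ig_01: "0 \<le> Ig n \<pi> w z" "Ig n \<pi> w z \<le> 1"
  unfolding Ig_def by (auto intro!: prod_nonneg prod_le_1 simp: ind_01)

lemma Ig_meas:
  assumes "P \<in> Pn n" "\<pi> \<in> Perms n"
  shows "Ig n \<pi> w \<in> borel_measurable P"
  unfolding Ig_def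
  by (intro borel_measurable_prod ind_meas Pn_comp_meas[OF assms(1)] Perms_lt[OF assms(2)]) simp

lemma Pn_finite_measure: "P \<in> Pn n \<Longrightarrow> finite_measure P"
  using Pn_prob prob_space.finite_measure by blast

lemma bounded_integrable:
  fixes f :: "(nat \<Rightarrow> real) \<Rightarrow> real" and B :: real
  assumes "P \<in> Pn n" "f \<in> borel_measurable P" "\<And>z. \<bar>f z\<bar> \<le> B"
  shows "integrable P f"
  using assms by (intro finite_measure.integrable_const_bound[where B=B] Pn_finite_measure) auto

lemma Ig_int: "P \<in> Pn n \<Longrightarrow> \<pi> \<in> Perms n \<Longrightarrow> integrable P (Ig n \<pi> w)"
  by (rule bounded_integrable[where B=1]) (auto simp: Ig_meas Ig_01 abs_le_iff intro: order_trans[OF _ Ig_01(1)] )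

lemma int_Ig_01:
  assumes "P \<in> Pn n" "\<pi> \<in> Perms n"
  shows "0 \<le> (\<integral>z. Ig n \<pi> w z \<partial>P)" "(\<integral>z. Ig n \<pi> w z \<partial>P) \<le> 1"
proof -
  interpret prob_space P using Pn_prob[OF assms(1)] .
  show "0 \<le> (\<integral>z. Ig n \<pi> w z \<partial>P)" by (rule Bochner_Integration.integral_nonneg) (simp add: Ig_01)
  have "(\<integral>z. Ig n \<pi> w z \<partial>P) \<le> (\<integral>z. 1 \<partial>P)"
    by (rule integral_mono) (auto simp: Ig_int assms Ig_01)
  then show "(\<integral>z. Ig n \<pi> w z \<partial>P) \<le> 1" by (simp add: prob_space)
qed

lemma gP_01:
  assumes "P \<in> Pn n"
  shows "0 \<le> gP n P w" "gP n P w \<le> 1"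
proof -
  have "(\<Sum>\<pi>\<in>Perms n. \<integral>z. Ig n \<pi> w z \<partial>P) \<le> (\<Sum>\<pi>\<in>Perms n. 1)"
    by (rule sum_mono) (simp add: int_Ig_01 assms)
  then show "gP n P w \<le> 1" by (simp add: gP_def Perms_card)
  show "0 \<le> gP n P w" unfolding gP_def
    by (intro divide_nonneg_pos sum_nonneg) (auto simp: int_Ig_01 assms)
qed

lemma gP_inf: assumes "P \<in> Pn n" shows "gP n P (replicate n \<infinity>) = 1"
proof -
  interpret prob_space P using Pn_prob[OF assms] .
  have "\<And>\<pi>. Ig n \<pi> (replicate n \<infinity>) = (\<lambda>z. 1)" unfolding Ig_def by (simp add: fun_eq_iff)
  then show ?thesis unfolding gP_def by (simp add: prob_space Perms_card)
qed

lemma gP_zero: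
  assumes "P \<in> Pn n" "i < n" "w ! i = 0"
  shows "gP n P w = 0"
proof -
  have "(\<integral>z. Ig n \<pi> w z \<partial>P) = 0" if \<pi>: "\<pi> \<in> Perms n" for \<pi>
  proof -
    have ae: "AE z in P. \<forall>j<n. 0 < z j" using assms(1) by (simp add: Pn_def)
    have "AE z in P. Ig n \<pi> w z = 0"
      using ae
    proof eventually_elim
      case (elim z)
      then have "0 < z (\<pi> i)" using Perms_lt[OF \<pi> assms(2)] by blast
      then have "ind (w ! i) (z (\<pi> i)) = 0" using assms(3) by (simp add: ind_def)
      then show ?case unfolding Ig_def using assms(2) by (intro prod_zero) auto
    qed
    then have "(\<integral>z. Ig n \<pi> w z \<partial>P) = (\<integral>z. 0 \<partial>P)"
      by (intro integral_cong_AE Ig_meas assms(1) \<pi>) auto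
    then show ?thesis by simp
  qed
  then show ?thesis unfolding gP_def by simp
qed

definition corner :: "nat \<Rightarrow> ereal list \<Rightarrow> ereal list \<Rightarrow> nat set \<Rightarrow> ereal list" where
  "corner n x y K = map (\<lambda>i. if i \<in> K then x ! i else y ! i) [0..<n]"

lemma Ig_corner:
  assumes "K \<subseteq> {..<n}"
  shows "Ig n \<pi> (corner n x y K) z =
    (\<Prod>i\<in>K. ind (x ! i) (z (\<pi> i))) * (\<Prod>i\<in>{..<n}-K. ind (y ! i) (z (\<pi> i)))"
proof -
  have "Ig n \<pi> (corner n x y K) z = (\<Prod>i<n. if i \<in> K then ind (x ! i) (z (\<pi> i)) else ind (y ! i) (z (\<pi> i)))"
    unfolding Ig_def corner_def by (intro prod.cong) auto
  also have "\<dots> = (\<Prod>i\<in>K. ind (x ! i) (z (\<pi> i))) * (\<Prod>i\<in>{..<n}-K. ind (y ! i) (z (\<pi> i)))"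
    by (subst prod.If_cases) (auto intro!: arg_cong2[where f="(*)"] prod.cong simp: Int_absorb1[OF assms] Diff_eq)
  finally show ?thesis .
qed

lemma prod_diff_expand:
  assumes "K0 = {..<n}"
  shows "(\<Prod>i<n. ind (y ! i) (z (\<pi> i)) - ind (x ! i) (z (\<pi> i)))
    = (\<Sum>K\<in>Pow {..<n}. (-1) ^ card K * Ig n \<pi> (corner n x y K) z)"
proof -
  have "(\<Prod>i<n. ind (y ! i) (z (\<pi> i)) - ind (x ! i) (z (\<pi> i)))
      = (\<Prod>i<n. (- ind (x ! i) (z (\<pi> i))) + ind (y ! i) (z (\<pi> i)))" by simp
  also have "\<dots> = (\<Sum>K\<in>Pow {..<n}. (\<Prod>i\<in>K. - ind (x ! i) (z (\<pi> i))) * (\<Prod>i\<in>{..<n}-K. ind (y ! i) (z (\<pi> i))))"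
    by (rule prod_add) simp
  also have "\<dots> = (\<Sum>K\<in>Pow {..<n}. (-1) ^ card K * Ig n \<pi> (corner n x y K) z)"
    by (intro sum.cong refl) (simp add: prod_uminus Ig_corner)
  finally show ?thesis .
qed

lemma gP_incr:
  assumes P: "P \<in> Pn n" and len: "length x = n" "length y = n" and le: "list_all2 (\<le>) x y"
  shows "0 \<le> (\<Sum>K \<in> Pow {..<n}. (-1) ^ card K * gP n P (map (\<lambda>i. if i \<in> K then x ! i else y ! i) [0..<n]))"
proof -
  have int: "\<And>\<pi> K. \<pi> \<in> Perms n \<Longrightarrow> integrable P (\<lambda>z. (-1) ^ card K * Ig n \<pi> (corner n x y K) z)"
    using Ig_int[OF P] by simp
  have "(\<Sum>K \<in> Pow {..<n}. (-1) ^ card K * gP n P (corner n x y K))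
     = (\<Sum>K \<in> Pow {..<n}. (\<Sum>\<pi>\<in>Perms n. \<integral>z. (-1) ^ card K * Ig n \<pi> (corner n x y K) z \<partial>P) / fact n)"
    unfolding gP_def by (simp add: sum_distrib_left)
  also have "\<dots> = (\<Sum>\<pi>\<in>Perms n. (\<Sum>K \<in> Pow {..<n}. \<integral>z. (-1) ^ card K * Ig n \<pi> (corner n x y K) z \<partial>P)) / fact n"
    by (simp add: sum_divide_distrib[symmetric] sum.swap[of _ "Pow {..<n}"])
  also have "\<dots> = (\<Sum>\<pi>\<in>Perms n. \<integral>z. (\<Sum>K \<in> Pow {..<n}. (-1) ^ card K * Ig n \<pi> (corner n x y K) z) \<partial>P) / fact n"
    by (intro arg_cong2[where f="(/)"] sum.cong refl, rule Bochner_Integration.integral_sum[symmetric], rule int) auto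
  also have "\<dots> = (\<Sum>\<pi>\<in>Perms n. \<integral>z. (\<Prod>i<n. ind (y ! i) (z (\<pi> i)) - ind (x ! i) (z (\<pi> i))) \<partial>P) / fact n"
    by (simp add: prod_diff_expand)
  also have "0 \<le> \<dots>"
  proof (intro divide_nonneg_pos sum_nonneg Bochner_Integration.integral_nonneg prod_nonneg)
    fix i z assume "i \<in> {..<n}"
    then have "x ! i \<le> y ! i" using le len by (simp add: list_all2_nthD)
    then show "0 \<le> ind (y ! i) (z (\<pi> i)) - ind (x ! i) (z (\<pi> i))" for \<pi>
      using ind_mono by simp
  qed simp
  finally show ?thesis unfolding corner_def .
qed

lemma finite_tendsto_eventually:
  fixes f :: "nat \<Rightarrow> 'a::t1_space"
  assumes "finite F" "\<And>k. f k \<in> F" "f \<longlonglongrightarrow> l"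
  shows "eventually (\<lambda>k. f k = l) sequentially"
proof -
  have "open (- (F - {l}))" using assms(1) by (intro open_Compl finite_imp_closed) simp
  moreover have "l \<in> - (F - {l})" by simp
  ultimately have "eventually (\<lambda>k. f k \<in> - (F - {l})) sequentially"
    using assms(3) topological_tendstoD by blast
  then show ?thesis using assms(2) by (auto elim!: eventually_mono)
qed

lemma Sbar_finite: "finite S \<Longrightarrow> finite (Sbar S)"
  by (simp add: Sbar_def)

lemma gP_rc: assumes "finite S" shows "right_cont_on_grid n S (gP n P)"
  unfolding right_cont_on_grid_def
proof (intro ballI allI impI)
  fix z w assume z: "z \<in> gdom n S" and h: "(\<forall>k. w k \<in> gdom n S \<and> list_all2 (\<le>) z (w k)) \<and> (\<forall>i<n. (\<lambda>k. w k ! i) \<longlonglongrightarrow> z ! i)"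
  have "eventually (\<lambda>k. w k ! i = z ! i) sequentially" if "i < n" for i
  proof (rule finite_tendsto_eventually[OF Sbar_finite[OF assms]])
    fix k have "w k \<in> gdom n S" using h by blast
    then show "w k ! i \<in> Sbar S" using that unfolding gdom_def by auto
  qed (use h that in blast)
  then have "eventually (\<lambda>k. \<forall>i\<in>{..<n}. w k ! i = z ! i) sequentially"
    by (intro eventually_ball_finite) auto
  then have "eventually (\<lambda>k. gP n P (w k) = gP n P z) sequentially"
  proof eventually_elim
    case (elim k)
    have "length (w k) = n" "length z = n" using h z unfolding gdom_def by auto
    then have "w k = z" using elim by (intro nth_equalityI) auto
    then show ?case by simp
  qed
  then show "(\<lambda>k. gP n P (w k)) \<longlonglongrightarrow> gP n P z" by (rule tendsto_eventually)
qed

lemma Ig_perm: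
  assumes "\<sigma> permutes {..<n}"
  shows "Ig n \<pi> (map (\<lambda>i. z ! \<sigma> i) [0..<n]) = Ig n (\<pi> \<circ> inv \<sigma>) z"
proof
  fix z'
  have "Ig n (\<pi> \<circ> inv \<sigma>) z z' = (\<Prod>i<n. ind (z ! \<sigma> i) (z' (\<pi> (inv \<sigma> (\<sigma> i)))))"
    unfolding Ig_def by (subst prod.permute[OF assms]) (simp add: comp_def)
  also have "\<dots> = Ig n \<pi> (map (\<lambda>i. z ! \<sigma> i) [0..<n]) z'"
    unfolding Ig_def using permutes_inverses(2)[OF assms] by (intro prod.cong) auto
  finally show "Ig n \<pi> (map (\<lambda>i. z ! \<sigma> i) [0..<n]) z' = Ig n (\<pi> \<circ> inv \<sigma>) z z'" by simp
qed

lemma gP_sym: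
  assumes "\<sigma> permutes {..<n}"
  shows "gP n P (map (\<lambda>i. z ! \<sigma> i) [0..<n]) = gP n P z"
proof -
  have "(\<Sum>\<pi>\<in>Perms n. \<integral>z'. Ig n (\<pi> \<circ> inv \<sigma>) z z' \<partial>P) = (\<Sum>\<pi>\<in>Perms n. \<integral>z'. Ig n \<pi> z z' \<partial>P)"
  proof (rule sum.reindex_bij_witness[where i="\<lambda>\<pi>. \<pi> \<circ> \<sigma>" and j="\<lambda>\<pi>. \<pi> \<circ> inv \<sigma>"])
    fix \<pi> assume "\<pi> \<in> Perms n"
    then show "\<pi> \<circ> inv \<sigma> \<circ> \<sigma> = \<pi>" "\<pi> \<circ> inv \<sigma> \<in> Perms n"
      using assms unfolding Perms_def
      by (auto simp: comp_assoc permutes_inv_o permutes_compose permutes_inv)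
    show "\<pi> \<circ> \<sigma> \<circ> inv \<sigma> = \<pi>" "\<pi> \<circ> \<sigma> \<in> Perms n"
      using assms \<open>\<pi> \<in> Perms n\<close> unfolding Perms_def
      by (auto simp: comp_assoc permutes_inv_o permutes_compose)
  qed simp
  then show ?thesis unfolding gP_def by (simp add: Ig_perm[OF assms])
qed

lemma gP_Gn:
  assumes "P \<in> Pn n" "finite S"
  shows "gP n P \<in> Gn n S" "symmetric_on_grid n S (gP n P)"
  unfolding Gn_def symmetric_on_grid_def n_increasing_on_grid_def
  using gP_01[OF assms(1)] gP_rc[OF assms(2)] gP_inf[OF assms(1)] gP_zero[OF assms(1)]
    gP_incr[OF assms(1)] gP_sym
  by (auto simp: gdom_def)



lemma makespan_alloc_eq:
  "makespan n T1 T2 (alg_alloc n T1 T2 z) =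
    max (\<Sum>j<n. if T1 j / T2 j < z j then T1 j else 0) (\<Sum>j<n. if T1 j / T2 j < z j then 0 else T2 j)"
proof -
  have e1: "alg_alloc n T1 T2 z \<inter> {..<n} = {j\<in>{..<n}. T1 j / T2 j < z j}"
    by (auto simp: alg_alloc_def)
  have e2: "{..<n} - alg_alloc n T1 T2 z = {j\<in>{..<n}. \<not> T1 j / T2 j < z j}"
    by (auto simp: alg_alloc_def)
  have s1: "(\<Sum>j<n. if T1 j / T2 j < z j then T1 j else 0) = sum T1 {j\<in>{..<n}. T1 j / T2 j < z j}"
    by (rule sum.inter_filter[symmetric]) simp
  have s2: "(\<Sum>j<n. if T1 j / T2 j < z j then 0 else T2 j) = sum T2 {j\<in>{..<n}. \<not> T1 j / T2 j < z j}"
    by (subst sum.inter_filter) (auto intro: sum.cong)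
  show ?thesis unfolding makespan_def e1 e2 s1 s2 ..
qed

lemma makespan_nonneg: "pos_times n T1 T2 \<Longrightarrow> 0 \<le> makespan n T1 T2 A"
  unfolding makespan_def pos_times_def
  by (auto intro!: sum_nonneg simp: less_imp_le le_max_iff_disj)

lemma makespan_pos: "pos_times n T1 T2 \<Longrightarrow> 0 < n \<Longrightarrow> 0 < makespan n T1 T2 A"
proof -
  assume p: "pos_times n T1 T2" and n: "0 < n"
  show ?thesis
  proof (cases "0 \<in> A")
    case True
    have "T1 0 \<le> (\<Sum>j\<in>A \<inter> {..<n}. T1 j)"
      using p n True unfolding pos_times_def by (intro member_le_sum) (auto simp: less_imp_le)
    then show ?thesis using p n unfolding makespan_def pos_times_def by (auto simp: less_max_iff_disj)
  next
    case False
    have "T2 0 \<le> (\<Sum>j\<in>{..<n} - A. T2 j)"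
      using p n False unfolding pos_times_def by (intro member_le_sum) (auto simp: less_imp_le)
    then show ?thesis using p n unfolding makespan_def pos_times_def by (auto simp: less_max_iff_disj)
  qed
qed

lemma thr_meas:
  fixes f :: "'a \<Rightarrow> real"
  assumes "f \<in> borel_measurable M"
  shows "(\<lambda>z. if c < f z then a else (b::real)) \<in> borel_measurable M"
  using assms by measurable

lemma makespan_meas:
  assumes "P \<in> Pn n"
  shows "(\<lambda>z. makespan n T1 T2 (alg_alloc n T1 T2 z)) \<in> borel_measurable P"
proof -
  have m: "\<And>j. j \<in> {..<n} \<Longrightarrow> (\<lambda>z. z j) \<in> borel_measurable P" using Pn_comp_meas[OF assms] by simp
  show ?thesis unfolding makespan_alloc_eq
    by (intro borel_measurable_max borel_measurable_sum thr_meas m) auto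
qed

lemma makespan_int:
  assumes "P \<in> Pn n" "pos_times n T1 T2"
  shows "integrable P (\<lambda>z. makespan n T1 T2 (alg_alloc n T1 T2 z))"
proof (rule bounded_integrable[OF assms(1) makespan_meas[OF assms(1)], where B="\<Sum>j<n. T1 j + T2 j"])
  fix z
  have "makespan n T1 T2 (alg_alloc n T1 T2 z) \<le> (\<Sum>j<n. T1 j + T2 j)"
    unfolding makespan_alloc_eq using assms(2) unfolding pos_times_def
    by (auto intro!: sum_mono simp: less_imp_le)
  then show "\<bar>makespan n T1 T2 (alg_alloc n T1 T2 z)\<bar> \<le> (\<Sum>j<n. T1 j + T2 j)"
    using makespan_nonneg[OF assms(2)] by simp
qed

lemma opt_pos: "pos_times n T1 T2 \<Longrightarrow> 0 < n \<Longrightarrow> 0 < opt_makespan n T1 T2"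
  unfolding opt_makespan_def by (subst Min_gr_iff) (auto simp: makespan_pos)

lemma opt_le: "A \<subseteq> {..<n} \<Longrightarrow> opt_makespan n T1 T2 \<le> makespan n T1 T2 A"
  unfolding opt_makespan_def by (rule Min_le) auto

lemma sum_two_lower:
  fixes f :: "nat \<Rightarrow> real"
  assumes "finite D" "a \<noteq> b" "\<And>j. j \<in> D \<Longrightarrow> 0 \<le> f j"
  shows "(if a \<in> D then f a else 0) + (if b \<in> D then f b else 0) \<le> sum f D"
proof -
  have "sum f (D \<inter> {a, b}) \<le> sum f D"
    using assms by (intro sum_mono2) auto
  moreover have "sum f (D \<inter> {a, b}) = (if a \<in> D then f a else 0) + (if b \<in> D then f b else 0)"
    using assms(2) by (cases "a \<in> D"; cases "b \<in> D") (auto simp: Int_insert_right)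
  ultimately show ?thesis by simp
qed



definition hfun :: "real \<Rightarrow> real \<Rightarrow> real \<Rightarrow> real \<Rightarrow> real" where
  "hfun x y s t = 1 + y - min 1 (1 - 1 / x + y) * ind x s - y * ind y t
      + min (1 + 1 / x) (1 + y) * (ind x s * ind y t)"

lemma ratio_T_le_P: "pos_times n T1 T2 \<Longrightarrow> ereal (ratio_T n P T1 T2) \<le> ratio_P n P"
  unfolding ratio_P_def by (rule SUP_upper2[where i="(T1,T2)"]) auto

lemma key_eps:
  fixes e :: real
  assumes P: "P \<in> Pn n" and n2: "2 \<le> n" and ab: "a < n" "b < n" "a \<noteq> b"
    and xy: "0 < x" "0 < y" and e: "0 < e"
  shows "\<exists>T1 T2. pos_times n T1 T2 \<and> 0 \<le> ratio_T n P T1 T2 \<and>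
     (\<integral>z. hfun x y (z a) (z b) \<partial>P) \<le> ratio_T n P T1 T2 * (1 + real n * e)"
proof -
  interpret prob_space P using Pn_prob[OF P] .
  define T1 where "T1 j = (if j = a then 1 else if j = b then y else e)" for j
  define T2 where "T2 j = (if j = a then 1 / x else if j = b then 1 else e)" for j
  have pos: "pos_times n T1 T2" unfolding pos_times_def T1_def T2_def using xy e by auto
  have nn: "0 < n" using n2 by simp
  let ?M = "\<lambda>z. makespan n T1 T2 (alg_alloc n T1 T2 z)"
  have inA: "a \<in> alg_alloc n T1 T2 z \<longleftrightarrow> x < z a" for z
    using ab xy by (simp add: alg_alloc_def T1_def T2_def)
  have inB: "b \<in> alg_alloc n T1 T2 z \<longleftrightarrow> y < z b" for z
    using ab xy by (simp add: alg_alloc_def T1_def T2_def)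
  have pw: "hfun x y (z a) (z b) \<le> ?M z" for z
  proof -
    define D where "D = alg_alloc n T1 T2 z"
    have L1: "(if a \<in> D \<inter> {..<n} then T1 a else 0) + (if b \<in> D \<inter> {..<n} then T1 b else 0) \<le> (\<Sum>j\<in>D \<inter> {..<n}. T1 j)"
      using pos ab(3) unfolding pos_times_def by (intro sum_two_lower) (auto simp: less_imp_le)
    have L2: "(if a \<in> {..<n} - D then T2 a else 0) + (if b \<in> {..<n} - D then T2 b else 0) \<le> (\<Sum>j\<in>{..<n} - D. T2 j)"
      using pos ab(3) unfolding pos_times_def by (intro sum_two_lower) (auto simp: less_imp_le)
    have M: "?M z = max (\<Sum>j\<in>D \<inter> {..<n}. T1 j) (\<Sum>j\<in>{..<n} - D. T2 j)"
      unfolding D_def makespan_def ..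
    have T: "T1 a = 1" "T1 b = y" "T2 a = 1 / x" "T2 b = 1" using ab(3) by (auto simp: T1_def T2_def)
    have iA: "a \<in> D \<longleftrightarrow> x < z a" and iB: "b \<in> D \<longleftrightarrow> y < z b" unfolding D_def using inA inB by auto
    have ix: "ind x (z a) = (if z a \<le> x then 1 else 0)" and iy: "ind y (z b) = (if z b \<le> y then 1 else 0)"
      by (auto simp: ind_def)
    have xinv: "0 < 1 / x" using xy by simp
    have iA': "a \<in> D \<longleftrightarrow> \<not> z a \<le> x" and iB': "b \<in> D \<longleftrightarrow> \<not> z b \<le> y" using iA iB by auto
    let ?S1 = "\<Sum>j\<in>D \<inter> {..<n}. T1 j" and ?S2 = "\<Sum>j\<in>{..<n} - D. T2 j"
    show ?thesis unfolding M hfun_def ix iy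
    proof (cases "z a \<le> x"; cases "z b \<le> y")
      assume c: "z a \<le> x" "z b \<le> y"
      then have "1 / x + 1 \<le> ?S2" using L2 ab by (simp add: iA' iB' T)
      then show "1 + y - min 1 (1 - 1 / x + y) * (if z a \<le> x then 1 else 0) - y * (if z b \<le> y then 1 else 0) +
        min (1 + 1 / x) (1 + y) * ((if z a \<le> x then 1 else 0) * (if z b \<le> y then 1 else 0)) \<le> max ?S1 ?S2"
        using c by (simp add: min_def max_def)
    next
      assume c: "z a \<le> x" "\<not> z b \<le> y"
      then have "1 / x \<le> ?S2" "y \<le> ?S1" using L1 L2 ab by (simp_all add: iA' iB' T)
      then show "1 + y - min 1 (1 - 1 / x + y) * (if z a \<le> x then 1 else 0) - y * (if z b \<le> y then 1 else 0) +
        min (1 + 1 / x) (1 + y) * ((if z a \<le> x then 1 else 0) * (if z b \<le> y then 1 else 0)) \<le> max ?S1 ?S2"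
        using c by (simp add: min_def max_def)
    next
      assume c: "\<not> z a \<le> x" "z b \<le> y"
      then have "1 \<le> ?S2" "1 \<le> ?S1" using L1 L2 ab by (simp_all add: iA' iB' T)
      then show "1 + y - min 1 (1 - 1 / x + y) * (if z a \<le> x then 1 else 0) - y * (if z b \<le> y then 1 else 0) +
        min (1 + 1 / x) (1 + y) * ((if z a \<le> x then 1 else 0) * (if z b \<le> y then 1 else 0)) \<le> max ?S1 ?S2"
        using c by (simp add: min_def max_def)
    next
      assume c: "\<not> z a \<le> x" "\<not> z b \<le> y"
      then have "1 + y \<le> ?S1" using L1 ab by (simp add: iA' iB' T)
      then show "1 + y - min 1 (1 - 1 / x + y) * (if z a \<le> x then 1 else 0) - y * (if z b \<le> y then 1 else 0) +
        min (1 + 1 / x) (1 + y) * ((if z a \<le> x then 1 else 0) * (if z b \<le> y then 1 else 0)) \<le> max ?S1 ?S2"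
        using c by (simp add: min_def max_def)
    qed
  qed
  have hmeas: "(\<lambda>z. hfun x y (z a) (z b)) \<in> borel_measurable P"
    unfolding hfun_def using Pn_comp_meas[OF P ab(1)] Pn_comp_meas[OF P ab(2)]
    by (intro borel_measurable_add borel_measurable_diff borel_measurable_times ind_meas) auto
  have hint: "integrable P (\<lambda>z. hfun x y (z a) (z b))"
  proof (rule bounded_integrable[OF P hmeas, where B="1 + y + (1 + 1/x + y) + y + (1 + y)"])
    fix z
    define p where "p = ind x (z a)"
    define q where "q = ind y (z b)"
    define c1 where "c1 = min 1 (1 - 1 / x + y)"
    define c2 where "c2 = min (1 + 1 / x) (1 + y)"
    have pq: "0 \<le> p" "p \<le> 1" "0 \<le> q" "q \<le> 1" unfolding p_def q_def by (auto simp: ind_01)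
    have c1: "\<bar>c1\<bar> \<le> 1 + 1/x + y" unfolding c1_def using xy by (auto simp: min_def abs_le_iff)
    have c2: "\<bar>c2\<bar> \<le> 1 + y" unfolding c2_def using xy by (auto simp: min_def abs_le_iff)
    have a1: "\<bar>c1 * p\<bar> \<le> 1 + 1/x + y" using c1 pq by (simp add: abs_mult mult_le_one order_trans[OF mult_right_le_one_le] abs_le_iff)
    have a2: "\<bar>y * q\<bar> \<le> y" using pq xy by (simp add: abs_mult mult_left_le)
    have a3: "\<bar>c2 * (p * q)\<bar> \<le> 1 + y" using pq c2
      by (simp add: abs_mult) (smt (verit) mult_left_le mult_nonneg_nonneg mult_le_one)
    have "\<bar>hfun x y (z a) (z b)\<bar> = \<bar>1 + y - c1 * p - y * q + c2 * (p * q)\<bar>"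
      unfolding hfun_def p_def q_def c1_def c2_def ..
    also have "\<dots> \<le> 1 + y + (1 + 1/x + y) + y + (1 + y)" using a1 a2 a3 xy by linarith
    finally show "\<bar>hfun x y (z a) (z b)\<bar> \<le> 1 + y + (1 + 1/x + y) + y + (1 + y)" .
  qed
  have E1: "(\<integral>z. hfun x y (z a) (z b) \<partial>P) \<le> exp_makespan n P T1 T2"
    unfolding exp_makespan_def using pw by (intro integral_mono hint makespan_int[OF P pos]) 
  have opos: "0 < opt_makespan n T1 T2" by (rule opt_pos[OF pos nn])
  have "opt_makespan n T1 T2 \<le> makespan n T1 T2 {a}" using ab by (intro opt_le) auto
  also have "\<dots> \<le> 1 + real n * e"
  proof -
    have "(\<Sum>j\<in>{..<n} - {a}. T2 j) \<le> (\<Sum>j\<in>{..<n} - {a}. (if j = b then 1 else 0) + e)"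
      using ab e by (intro sum_mono) (auto simp: T2_def)
    also have "\<dots> \<le> (\<Sum>j\<in>{..<n}. (if j = b then 1 else 0) + e)"
      using e by (intro sum_mono2) auto
    also have "\<dots> = 1 + real n * e" using ab by (simp add: sum.distrib)
    finally have "(\<Sum>j\<in>{..<n} - {a}. T2 j) \<le> 1 + real n * e" .
    moreover have "(\<Sum>j\<in>{a} \<inter> {..<n}. T1 j) = 1" using ab by (simp add: T1_def)
    moreover have "0 \<le> real n * e" using e by simp
    ultimately show ?thesis unfolding makespan_def by simp
  qed
  finally have ople: "opt_makespan n T1 T2 \<le> 1 + real n * e" .
  have Enn: "0 \<le> exp_makespan n P T1 T2"
    unfolding exp_makespan_def by (rule Bochner_Integration.integral_nonneg) (simp add: makespan_nonneg[OF pos])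
  have rnn: "0 \<le> ratio_T n P T1 T2" unfolding ratio_T_def using Enn opos by simp
  have "exp_makespan n P T1 T2 = ratio_T n P T1 T2 * opt_makespan n T1 T2"
    unfolding ratio_T_def using opos by simp
  also have "\<dots> \<le> ratio_T n P T1 T2 * (1 + real n * e)" using rnn ople by (intro mult_left_mono) auto
  finally show ?thesis using pos rnn E1 by (intro exI[of _ T1] exI[of _ T2]) auto
qed



lemma h_le_ratio:
  assumes P: "P \<in> Pn n" and n2: "2 \<le> n" and \<pi>: "\<pi> \<in> Perms n" and xy: "0 < x" "0 < y"
  shows "ereal (\<integral>z. hfun x y (z (\<pi> 0)) (z (\<pi> 1)) \<partial>P) \<le> ratio_P n P"
proof -
  have ab: "\<pi> 0 < n" "\<pi> 1 < n" using Perms_lt[OF \<pi>] n2 by auto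
  have "\<pi> 0 \<noteq> \<pi> 1"
  proof
    assume "\<pi> 0 = \<pi> 1"
    moreover have "inj \<pi>" using \<pi> unfolding Perms_def by (auto intro: permutes_inj)
    ultimately show False by (simp add: inj_eq)
  qed
  note K = key_eps[OF P n2 ab this xy]
  let ?h = "\<integral>z. hfun x y (z (\<pi> 0)) (z (\<pi> 1)) \<partial>P"
  show ?thesis
  proof (cases "ratio_P n P = \<infinity>")
    case True then show ?thesis by simp
  next
    case False
    obtain T1 T2 where T: "pos_times n T1 T2" "0 \<le> ratio_T n P T1 T2" using K[of 1] by auto
    have "ereal (ratio_T n P T1 T2) \<le> ratio_P n P" by (rule ratio_T_le_P[OF T(1)])
    then obtain r where r: "ratio_P n P = ereal r" using False T(2)
      by (cases "ratio_P n P") auto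
    have r0: "0 \<le> r" using \<open>ereal (ratio_T n P T1 T2) \<le> ratio_P n P\<close> T(2) r by simp
    have "?h \<le> r"
    proof (rule field_le_epsilon)
      fix d :: real assume d: "0 < d"
      have rn: "0 \<le> r * real n" using r0 by simp
      define e where "e = d / (r * real n + 1)"
      have e: "0 < e" unfolding e_def using d r0 by (intro divide_pos_pos) (auto intro: add_nonneg_pos)
      obtain T1 T2 where T: "pos_times n T1 T2" "0 \<le> ratio_T n P T1 T2"
        "?h \<le> ratio_T n P T1 T2 * (1 + real n * e)" using K[OF e] by auto
      have "ratio_T n P T1 T2 \<le> r" using ratio_T_le_P[OF T(1), of P] r by simp
      then have "?h \<le> r * (1 + real n * e)" using T(3) e by (smt (verit) mult_right_mono of_nat_0_le_iff mult_nonneg_nonneg)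
      also have "\<dots> = r + (r * real n) * e" by (simp add: algebra_simps)
      also have "(r * real n) * e \<le> d"
      proof -
        have "(r * real n) * e = d * ((r * real n) / (r * real n + 1))" unfolding e_def by simp
        also have "\<dots> \<le> d * 1" using d rn by (intro mult_left_mono) (auto simp: divide_le_eq_1)
        finally show ?thesis by simp
      qed
      finally show "?h \<le> r + d" by simp
    qed
    then show ?thesis using r by simp
  qed
qed

lemma Ig_two:
  "Ig (Suc (Suc m)) \<pi> (a # b # replicate m \<infinity>) z = ind a (z (\<pi> 0)) * ind b (z (\<pi> 1))"
  unfolding Ig_def by (simp add: prod.lessThan_Suc_shift del: prod.lessThan_Suc)

lemma Ig_two_fun:
  "Ig (Suc (Suc m)) \<pi> (a # b # replicate m \<infinity>) = (\<lambda>z. ind a (z (\<pi> 0)) * ind b (z (\<pi> 1)))"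
  by (rule ext) (rule Ig_two)

lemma alg_aux:
  fixes F SH SA SB SAB c1 c2 y :: real
  assumes "F \<noteq> 0" "SH = F * (1 + y) - c1 * SA - y * SB + c2 * SAB"
  shows "1 + y - c1 * (SA / F) - y * (SB / F) + c2 * (SAB / F) = SH / F"
proof -
  have "SH / F = (F * (1 + y) - c1 * SA - y * SB + c2 * SAB) / F" using assms(2) by simp
  also have "\<dots> = 1 + y - c1 * (SA / F) - y * (SB / F) + c2 * (SAB / F)"
    using assms(1) by (simp add: diff_divide_distrib add_divide_distrib)
  finally show ?thesis by simp
qed

lemma phi_eq:
  assumes P: "P \<in> Pn n" and n2: "2 \<le> n" and xy: "0 < x" "0 < y"
  shows "phi n (gP n P) x y = (\<Sum>\<pi>\<in>Perms n. \<integral>z. hfun x y (z (\<pi> 0)) (z (\<pi> 1)) \<partial>P) / fact n"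
proof -
  interpret prob_space P using Pn_prob[OF P] .
  obtain m where m: "n = Suc (Suc m)" using n2 by (metis add_2_eq_Suc le_Suc_ex)
  have l1: "ereal x # replicate (n - 1) \<infinity> = ereal x # \<infinity> # replicate m \<infinity>" by (simp add: m)
  have l2: "ereal x # ereal y # replicate (n - 2) \<infinity> = ereal x # ereal y # replicate m \<infinity>" by (simp add: m)
  have l3: "ereal y # replicate (n - 1) \<infinity> = map (\<lambda>i. (\<infinity> # ereal y # replicate m \<infinity>) ! Transposition.transpose 0 1 i) [0..<n]"
  proof (rule nth_equalityI)
    show "length (ereal y # replicate (n - 1) \<infinity>) = length (map (\<lambda>i. (\<infinity> # ereal y # replicate m \<infinity>) ! Transposition.transpose 0 1 i) [0..<n])"
      using n2 by simp
    fix i assume "i < length (ereal y # replicate (n - 1) \<infinity>)"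
    then have i: "i < n" using n2 by simp
    have e: "map (\<lambda>i. (\<infinity> # ereal y # replicate m \<infinity>) ! Transposition.transpose 0 1 i) [0..<n] ! i
       = (\<infinity> # ereal y # replicate m \<infinity>) ! Transposition.transpose 0 1 i"
      using i by (simp add: nth_map_upt)
    show "(ereal y # replicate (n - 1) \<infinity>) ! i = map (\<lambda>i. (\<infinity> # ereal y # replicate m \<infinity>) ! Transposition.transpose 0 1 i) [0..<n] ! i"
      unfolding e using i
      by (cases "i = 0"; cases "i = 1") (auto simp: m transpose_def nth_Cons')
  qed
  have tp: "Transposition.transpose 0 1 permutes {..<n}" using n2 by (intro permutes_swap_id) auto
  let ?A = "\<lambda>\<pi> z. ind x (z (\<pi> 0))" and ?B = "\<lambda>\<pi> z. ind y (z (\<pi> 1))"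
  have mA: "\<And>\<pi>. \<pi> \<in> Perms n \<Longrightarrow> ?A \<pi> \<in> borel_measurable P"
    using Pn_comp_meas[OF P] Perms_lt n2 by (intro ind_meas) auto
  have mB: "\<And>\<pi>. \<pi> \<in> Perms n \<Longrightarrow> ?B \<pi> \<in> borel_measurable P"
    using Pn_comp_meas[OF P] Perms_lt n2 by (intro ind_meas) auto
  have iA: "\<And>\<pi>. \<pi> \<in> Perms n \<Longrightarrow> integrable P (?A \<pi>)"
    by (rule bounded_integrable[OF P mA, where B=1]) (auto simp: abs_le_iff ind_01 intro: order_trans[OF _ ind_01(1)])
  have iB: "\<And>\<pi>. \<pi> \<in> Perms n \<Longrightarrow> integrable P (?B \<pi>)"
    by (rule bounded_integrable[OF P mB, where B=1]) (auto simp: abs_le_iff ind_01 intro: order_trans[OF _ ind_01(1)])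
  have iAB: "\<And>\<pi>. \<pi> \<in> Perms n \<Longrightarrow> integrable P (\<lambda>z. ?A \<pi> z * ?B \<pi> z)"
    by (rule bounded_integrable[OF P borel_measurable_times[OF mA mB], where B=1])
       (auto simp: abs_le_iff ind_01 mult_le_one intro: order_trans[OF _ mult_nonneg_nonneg])
  have gA: "gP n P (ereal x # replicate (n - 1) \<infinity>) = (\<Sum>\<pi>\<in>Perms n. \<integral>z. ?A \<pi> z \<partial>P) / fact n"
    unfolding gP_def l1 by (simp add: m Ig_two_fun)
  have gB: "gP n P (ereal y # replicate (n - 1) \<infinity>) = (\<Sum>\<pi>\<in>Perms n. \<integral>z. ?B \<pi> z \<partial>P) / fact n"
    unfolding l3 gP_sym[OF tp] unfolding gP_def by (simp add: m Ig_two_fun)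
  have gAB: "gP n P (ereal x # ereal y # replicate (n - 2) \<infinity>) = (\<Sum>\<pi>\<in>Perms n. \<integral>z. ?A \<pi> z * ?B \<pi> z \<partial>P) / fact n"
    unfolding gP_def l2 by (simp add: m Ig_two_fun)
  define c1 where "c1 = min 1 (1 - 1 / x + y)"
  define c2 where "c2 = min (1 + 1 / x) (1 + y)"
  have hi: "(\<integral>z. hfun x y (z (\<pi> 0)) (z (\<pi> 1)) \<partial>P) =
      1 + y - c1 * (\<integral>z. ?A \<pi> z \<partial>P) - y * (\<integral>z. ?B \<pi> z \<partial>P) + c2 * (\<integral>z. ?A \<pi> z * ?B \<pi> z \<partial>P)"
    if \<pi>: "\<pi> \<in> Perms n" for \<pi>
  proof -
    have "(\<integral>z. hfun x y (z (\<pi> 0)) (z (\<pi> 1)) \<partial>P) =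
       (\<integral>z. (1 + y) - c1 * ?A \<pi> z - y * ?B \<pi> z + c2 * (?A \<pi> z * ?B \<pi> z) \<partial>P)"
      unfolding hfun_def c1_def c2_def ..
    also have "\<dots> = (1 + y) - c1 * (\<integral>z. ?A \<pi> z \<partial>P) - y * (\<integral>z. ?B \<pi> z \<partial>P) + c2 * (\<integral>z. ?A \<pi> z * ?B \<pi> z \<partial>P)"
      using iA[OF \<pi>] iB[OF \<pi>] iAB[OF \<pi>] by (simp add: prob_space)
    finally show ?thesis .
  qed
  have fn: "(fact n :: real) \<noteq> 0" by simp
  have "(\<Sum>\<pi>\<in>Perms n. \<integral>z. hfun x y (z (\<pi> 0)) (z (\<pi> 1)) \<partial>P) =
     (\<Sum>\<pi>\<in>Perms n. (1 + y) - c1 * (\<integral>z. ?A \<pi> z \<partial>P) - y * (\<integral>z. ?B \<pi> z \<partial>P) + c2 * (\<integral>z. ?A \<pi> z * ?B \<pi> z \<partial>P))"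
    by (intro sum.cong refl hi)
  also have "\<dots> = fact n * (1 + y) - c1 * (\<Sum>\<pi>\<in>Perms n. \<integral>z. ?A \<pi> z \<partial>P) - y * (\<Sum>\<pi>\<in>Perms n. \<integral>z. ?B \<pi> z \<partial>P)
     + c2 * (\<Sum>\<pi>\<in>Perms n. \<integral>z. ?A \<pi> z * ?B \<pi> z \<partial>P)"
    by (simp add: sum.distrib sum_subtractf sum_distrib_left Perms_card)
  finally have SH: "(\<Sum>\<pi>\<in>Perms n. \<integral>z. hfun x y (z (\<pi> 0)) (z (\<pi> 1)) \<partial>P) = fact n * (1 + y) - c1 * (\<Sum>\<pi>\<in>Perms n. \<integral>z. ?A \<pi> z \<partial>P) - y * (\<Sum>\<pi>\<in>Perms n. \<integral>z. ?B \<pi> z \<partial>P)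
     + c2 * (\<Sum>\<pi>\<in>Perms n. \<integral>z. ?A \<pi> z * ?B \<pi> z \<partial>P)" .
  show ?thesis
    unfolding phi_def gA gB gAB c1_def[symmetric] c2_def[symmetric]
    by (rule alg_aux[OF fn SH])
qed

theorem theorem6:
  fixes n :: nat and P :: "(nat \<Rightarrow> real) measure" and S :: "real set"
  assumes "n \<ge> 2" and "P \<in> Cn n" and "finite S" and "S \<subseteq> {0<..}"
  shows "ratio_P n P \<ge> Rn n \<and> Rn n \<ge> Rn_grid n S"
proof
  have "P \<in> Pn n" using assms(2) by (simp add: Cn_def)
  then show "Rn n \<le> ratio_P n P" unfolding Rn_def by (rule INF_lower)
next
  show "Rn_grid n S \<le> Rn n" unfolding Rn_def
  proof (rule INF_greatest)
    fix Q assume Q: "Q \<in> Pn n"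
    have "Rn_grid n S \<le> (SUP p \<in> S \<times> S. ereal (phi n (gP n Q) (fst p) (snd p)))"
      unfolding Rn_grid_def using gP_Gn[OF Q assms(3)] by (intro INF_lower) auto
    also have "\<dots> \<le> ratio_P n Q"
    proof (rule SUP_least)
      fix p assume p: "p \<in> S \<times> S"
      then have xy: "0 < fst p" "0 < snd p" using assms(4) by auto
      show "ereal (phi n (gP n Q) (fst p) (snd p)) \<le> ratio_P n Q"
      proof (cases "ratio_P n Q = \<infinity>")
        case True then show ?thesis by simp
      next
        case False
        have h0: "ereal (\<integral>z. hfun (fst p) (snd p) (z (\<pi> 0)) (z (\<pi> 1)) \<partial>Q) \<le> ratio_P n Q"
          if "\<pi> \<in> Perms n" for \<pi> using h_le_ratio[OF Q assms(1) that xy] .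
        have "Perms n \<noteq> {}" using Perms_card[of n] Perms_finite[of n] by auto
        then obtain \<pi>0 where "\<pi>0 \<in> Perms n" by blast
        from h0[OF this] False obtain r where r: "ratio_P n Q = ereal r" by (cases "ratio_P n Q") auto
        have "(\<Sum>\<pi>\<in>Perms n. \<integral>z. hfun (fst p) (snd p) (z (\<pi> 0)) (z (\<pi> 1)) \<partial>Q) \<le> (\<Sum>\<pi>\<in>Perms n. r)"
          using h0 r by (intro sum_mono) simp
        then have "(\<Sum>\<pi>\<in>Perms n. \<integral>z. hfun (fst p) (snd p) (z (\<pi> 0)) (z (\<pi> 1)) \<partial>Q) / fact n \<le> r"
          by (simp add: Perms_card divide_le_eq mult.commute)
        then show ?thesis unfolding phi_eq[OF Q assms(1) xy] r by simp
      qed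
    qed
    finally show "Rn_grid n S \<le> ratio_P n Q" .
  qed
qed


end
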